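(* Let $G$ be an outerplanar graph with $n \geq 3$ vertices. Then every secure total dominating set of $G$ has at least $\lceil (n+2)/3 \rceil$ vertices; that is, \[ \gamma_{st}(G) \geq \left\lceil \frac{n+2}{3} \right\rceil . \]
   Context: All graphs are finite, simple and undirected. A graph is outerplanar if it has a crossing-free embedding in the plane in which every vertex lies on the boundary of the outer (unbounded) face. A set $S \subseteq V(G)$ is a total dominating set of $G$ if every vertex of $G$ (including the vertices of $S$) is adjacent to some vertex of $S$. A total dominating set $S$ is a secure total dominating set if for every vertex $u \in V(G)\setminus S$ there is a vertex $v \in S$ with $uv \in E(G)$ such that $(S \setminus \{v\}) \cup \{u\}$ is also a total dominating set of $G$. The secure total domination number $\gamma_{st}(G)$ is the minimum cardinality of a secure total dominating set of $G$. *)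

theory Defs
  imports "HOL-Analysis.Analysis"
begin

definition simple_graph :: "'a set \<Rightarrow> 'a set set \<Rightarrow> bool" where
  "simple_graph V E \<longleftrightarrow> finite V \<and>
     (\<forall>e\<in>E. \<exists>u v. u \<in> V \<and> v \<in> V \<and> u \<noteq> v \<and> e = {u, v})"

definition adj :: "'a set set \<Rightarrow> 'a \<Rightarrow> 'a \<Rightarrow> bool" where
  "adj E u v \<longleftrightarrow> {u, v} \<in> E"

text \<open>Outerplanar: every vertex lies on the boundary of the outer (unbounded) face,
  i.e. the frontier of the unbounded part of the complement of the drawing.\<close>
definition outerplanar :: "'a set \<Rightarrow> 'a set set \<Rightarrow> bool" where
  "outerplanar V E \<longleftrightarrow> simple_graph V E \<and>
     (\<exists>(p :: 'a \<Rightarrow> complex) (\<gamma> :: 'a set \<Rightarrow> real \<Rightarrow> complex).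
        inj_on p V \<and>
        (\<forall>e\<in>E. arc (\<gamma> e) \<and> {pathstart (\<gamma> e), pathfinish (\<gamma> e)} = p ` e) \<and>
        (\<forall>e\<in>E. \<forall>v\<in>V. p v \<in> path_image (\<gamma> e) \<longrightarrow> v \<in> e) \<and>
        (\<forall>e1\<in>E. \<forall>e2\<in>E. e1 \<noteq> e2 \<longrightarrow>
            path_image (\<gamma> e1) \<inter> path_image (\<gamma> e2) \<subseteq> p ` (e1 \<inter> e2)) \<and>
        (let D = p ` V \<union> (\<Union>e\<in>E. path_image (\<gamma> e))
         in \<forall>v\<in>V. p v \<in> frontier (outside D)))"

definition total_dominating :: "'a set \<Rightarrow> 'a set set \<Rightarrow> 'a set \<Rightarrow> bool" where
  "total_dominating V E S \<longleftrightarrow> S \<subseteq> V \<and> (\<forall>x\<in>V. \<exists>s\<in>S. adj E x s)"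

definition secure_total_dominating :: "'a set \<Rightarrow> 'a set set \<Rightarrow> 'a set \<Rightarrow> bool" where
  "secure_total_dominating V E S \<longleftrightarrow> total_dominating V E S \<and>
     (\<forall>u\<in>V - S. \<exists>v\<in>S. adj E u v \<and> total_dominating V E ((S - {v}) \<union> {u}))"

end

theory Submission
  imports Defs
begin



lemma jordan2:
  fixes c1 c2 :: "real \<Rightarrow> complex"
  assumes "arc c1" "arc c2" "pathstart c1 = a" "pathstart c2 = a"
    "pathfinish c1 = b" "pathfinish c2 = b"
    "path_image c1 \<inter> path_image c2 = {a,b}"
  defines "J \<equiv> path_image c1 \<union> path_image c2"
  shows "inside J \<noteq> {}" "open (inside J)" "connected (inside J)"
    "open (outside J)" "connected (outside J)"
    "inside J \<union> outside J = - J" "frontier (inside J) = J" "closed J" "compact J"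
proof -
  have sp: "simple_path (c1 +++ reversepath c2)"
    using assms by (simp add: simple_path_join_loop_eq arc_reversepath)
  have pi: "path_image (c1 +++ reversepath c2) = J"
    using assms by (simp add: path_image_join)
  have "compact J" unfolding J_def using assms
    by (simp add: compact_Un compact_arc_image)
  then show "inside J \<noteq> {}" "open (inside J)" "connected (inside J)"
    "open (outside J)" "connected (outside J)"
    "inside J \<union> outside J = - J" "frontier (inside J) = J" "closed J" "compact J"
    using Jordan_inside_outside[OF sp] assms pi compact_imp_closed by auto
qed

lemma conn_split:
  fixes C :: "complex set"
  assumes "connected C" "open A" "open B" "A \<inter> B = {}" "C \<subseteq> A \<union> B" "x \<in> C" "x \<in> B"
  shows "C \<subseteq> B"
  using connectedD[OF assms(1,2,3)] assms(4-7) by blast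

lemma theta_inside:
  fixes c1 c2 c3 :: "real \<Rightarrow> complex"
  assumes a1: "arc c1" and a2: "arc c2" and a3: "arc c3"
    and s: "pathstart c1 = a" "pathstart c2 = a" "pathstart c3 = a"
    and f: "pathfinish c1 = b" "pathfinish c2 = b" "pathfinish c3 = b"
    and i12: "path_image c1 \<inter> path_image c2 = {a,b}"
    and i13: "path_image c1 \<inter> path_image c3 = {a,b}"
    and i23: "path_image c2 \<inter> path_image c3 = {a,b}"
    and q1: "q1 \<in> path_image c1 - {a,b}"
    and q2: "q2 \<in> path_image c2 - {a,b}"
    and q3: "q3 \<in> path_image c3 - {a,b}"
  shows "q1 \<in> inside (path_image c2 \<union> path_image c3) \<or>
         q2 \<in> inside (path_image c1 \<union> path_image c3) \<or>
         q3 \<in> inside (path_image c1 \<union> path_image c2)"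
proof (rule ccontr)
  assume nq: "\<not> ?thesis"
  let ?P1 = "path_image c1" let ?P2 = "path_image c2" let ?P3 = "path_image c3"
  let ?J12 = "?P1 \<union> ?P2" let ?J13 = "?P1 \<union> ?P3" let ?J23 = "?P2 \<union> ?P3"
  note J12 = jordan2[OF a1 a2 s(1,2) f(1,2) i12]
  note J13 = jordan2[OF a1 a3 s(1,3) f(1,3) i13]
  note J23 = jordan2[OF a2 a3 s(2,3) f(2,3) i23]
  have ab: "a \<in> ?P1" "b \<in> ?P1" using s f by auto
  have q1o: "q1 \<in> outside ?J23"
  proof -
    have "q1 \<in> - ?J23" using q1 i12 i13 by blast
    then show ?thesis using nq J23(6) by blast
  qed
  have q2o: "q2 \<in> outside ?J13"
  proof -
    have "q2 \<in> - ?J13" using q2 i12 i23 by blast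
    then show ?thesis using nq J13(6) by blast
  qed
  have q3o: "q3 \<in> outside ?J12"
  proof -
    have "q3 \<in> - ?J12" using q3 i13 i23 by blast
    then show ?thesis using nq J12(6) by blast
  qed
  have c3e: "connected (?P3 - {a,b})"
    using connected_simple_path_endless[of c3] a3 s f arc_imp_simple_path by auto
  have P3o: "?P3 - {a,b} \<subseteq> outside ?J12"
  proof (rule conn_split[OF c3e, of "inside ?J12" "outside ?J12" q3])
    show "open (inside ?J12)" by (rule J12(2))
    show "open (outside ?J12)" by (rule J12(4))
    show "inside ?J12 \<inter> outside ?J12 = {}" by simp
    have "?P3 - {a, b} \<subseteq> - ?J12" using i13 i23 by blast
    then show "?P3 - {a, b} \<subseteq> inside ?J12 \<union> outside ?J12" using J12(6) by simp
    show "q3 \<in> ?P3 - {a, b}" using q3 .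
    show "q3 \<in> outside ?J12" using q3o .
  qed
  have I12c3: "inside ?J12 \<inter> ?P3 = {}"
  proof -
    have "inside ?J12 \<inter> (?P3 - {a,b}) = {}"
      using P3o inside_Int_outside[of ?J12] by blast
    moreover have "inside ?J12 \<inter> {a,b} = {}"
      using ab inside_no_overlap[of ?J12] by blast
    ultimately show ?thesis by blast
  qed
  have I12n: "inside ?J12 \<inter> ?J12 = {}" by (rule inside_no_overlap)
  have sub13: "inside ?J12 \<subseteq> inside ?J13 \<union> outside ?J13"
  proof -
    have "inside ?J12 \<subseteq> - ?J13" using I12c3 I12n by blast
    then show ?thesis using J13(6) by simp
  qed
  have sub23: "inside ?J12 \<subseteq> inside ?J23 \<union> outside ?J23"
  proof -
    have "inside ?J12 \<subseteq> - ?J23" using I12c3 I12n by blast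
    then show ?thesis using J23(6) by simp
  qed
  have o13: "inside ?J12 \<subseteq> outside ?J13"
  proof (rule ccontr)
    assume asm: "\<not> inside ?J12 \<subseteq> outside ?J13"
    have "outside ?J13 \<inter> inside ?J12 = {} \<or> inside ?J13 \<inter> inside ?J12 = {}"
      by (rule connectedD[OF J12(3) J13(4) J13(2)]) (use sub13 inside_Int_outside[of ?J13] in blast)+
    then have "inside ?J12 \<subseteq> inside ?J13"
      using asm sub13 by blast
    then have "closure (inside ?J12) \<subseteq> ?J13 \<union> inside ?J13"
      using closure_mono closure_inside_subset[OF J13(8)] by blast
    moreover have "q2 \<in> closure (inside ?J12)"
      using J12(7) q2 unfolding frontier_def by blast
    ultimately have "q2 \<in> inside ?J13" using q2 i12 i23 by blast
    then show False using q2o inside_Int_outside[of ?J13] by blast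
  qed
  have o23: "inside ?J12 \<subseteq> outside ?J23"
  proof (rule ccontr)
    assume asm: "\<not> inside ?J12 \<subseteq> outside ?J23"
    have "outside ?J23 \<inter> inside ?J12 = {} \<or> inside ?J23 \<inter> inside ?J12 = {}"
      by (rule connectedD[OF J12(3) J23(4) J23(2)]) (use sub23 inside_Int_outside[of ?J23] in blast)+
    then have "inside ?J12 \<subseteq> inside ?J23"
      using asm sub23 by blast
    then have "closure (inside ?J12) \<subseteq> ?J23 \<union> inside ?J23"
      using closure_mono closure_inside_subset[OF J23(8)] by blast
    moreover have "q1 \<in> closure (inside ?J12)"
      using J12(7) q1 unfolding frontier_def by blast
    ultimately have "q1 \<in> inside ?J23" using q1 i12 i13 by blast
    then show False using q1o inside_Int_outside[of ?J23] by blast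
  qed
  obtain x where x: "x \<in> inside ?J12" using J12(1) by blast
  have bT: "bounded (?P1 \<union> ?P2 \<union> ?P3)"
    using a1 a2 a3 by (simp add: bounded_arc_image)
  obtain y where y: "y \<in> outside (?P1 \<union> ?P2 \<union> ?P3)"
    using unbounded_outside[OF bT] by fastforce
  have y13: "y \<in> outside ?J13" using y outside_mono[of ?J13 "?P1 \<union> ?P2 \<union> ?P3"] by blast
  have y23: "y \<in> outside ?J23" using y outside_mono[of ?J23 "?P1 \<union> ?P2 \<union> ?P3"] by blast
  have y12: "y \<in> outside ?J12" using y outside_mono[of ?J12 "?P1 \<union> ?P2 \<union> ?P3"] by blast
  have cc13: "connected_component (- ?J13) x y"
    unfolding connected_component_def
    using J13(5) o13 x y13 outside_no_overlap[of ?J13] by blast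
  have cc23: "connected_component (- ?J23) x y"
    unfolding connected_component_def
    using J23(5) o23 x y23 outside_no_overlap[of ?J23] by blast
  have int: "?J13 \<inter> ?J23 = ?P3"
  proof -
    have "a \<in> ?P3" "b \<in> ?P3" using s f pathstart_in_path_image[of c3] pathfinish_in_path_image[of c3] by auto
    moreover have "(?P1 \<union> ?P3) \<inter> (?P2 \<union> ?P3) = (?P1 \<inter> ?P2) \<union> ?P3" by (rule Un_Int_distrib2[symmetric])
    ultimately show ?thesis using i12 by auto
  qed
  have "connected (?J13 \<inter> ?J23)"
    unfolding int using a3 by (simp add: arc_imp_path connected_path_image)
  then have "connected_component (- (?J13 \<union> ?J23)) x y"
    using Janiszewski[OF J13(9) J23(8) _ cc13 cc23] by blast
  then have "connected_component (- ?J12) x y"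
    using connected_component_of_subset[of "- (?J13 \<union> ?J23)" x y "- ?J12"] by blast
  then have "connected_component_set (- ?J12) y = connected_component_set (- ?J12) x"
    using connected_component_eq by (metis mem_Collect_eq)
  then show False using x y12 unfolding inside_def outside_def by auto
qed




fun pedges :: "'a list \<Rightarrow> 'a set set" where
  "pedges (x # y # zs) = insert {x,y} (pedges (y # zs))"
| "pedges _ = {}"

lemma pedges_subset: "e \<in> pedges xs \<Longrightarrow> e \<subseteq> set xs"
  by (induction xs rule: pedges.induct) auto

lemma pedges_hd_last:
  "distinct xs \<Longrightarrow> length xs \<ge> 3 \<Longrightarrow> {hd xs, last xs} \<notin> pedges xs"
proof (cases xs rule: pedges.cases)
  case (1 x y zs)
  assume d: "distinct xs" and l: "length xs \<ge> 3"
  then obtain w ws where zs: "zs = w # ws" using 1 by (cases zs) auto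
  have lx: "last xs = last (y # zs)" using 1 by simp
  have "last (y # zs) \<in> set zs" using zs by simp
  then have ly: "last xs \<noteq> y" "last xs \<noteq> x" using d 1 lx by auto
  have "{x, last xs} \<noteq> {x, y}" using ly by (auto simp: doubleton_eq_iff)
  moreover have "{x, last xs} \<notin> pedges (y # zs)"
    using pedges_subset[of "{x, last xs}" "y # zs"] d 1 by auto
  ultimately show ?thesis using 1 by simp
qed auto

lemma pedges_first: "length xs \<ge> 2 \<Longrightarrow> {xs ! 0, xs ! 1} \<in> pedges xs"
  by (cases xs rule: pedges.cases) auto

locale emb =
  fixes V :: "'a set" and E :: "'a set set" and p :: "'a \<Rightarrow> complex" and \<gamma> :: "'a set \<Rightarrow> real \<Rightarrow> complex"
  assumes sg: "simple_graph V E"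
    and injp: "inj_on p V"
    and arcs: "\<forall>e\<in>E. arc (\<gamma> e) \<and> {pathstart (\<gamma> e), pathfinish (\<gamma> e)} = p ` e"
    and novert: "\<forall>e\<in>E. \<forall>v\<in>V. p v \<in> path_image (\<gamma> e) \<longrightarrow> v \<in> e"
    and nocross: "\<forall>e1\<in>E. \<forall>e2\<in>E. e1 \<noteq> e2 \<longrightarrow>
            path_image (\<gamma> e1) \<inter> path_image (\<gamma> e2) \<subseteq> p ` (e1 \<inter> e2)"
    and outer: "\<forall>v\<in>V. p v \<in> frontier (outside (p ` V \<union> (\<Union>e\<in>E. path_image (\<gamma> e))))"
begin

lemma edge_arc:
  assumes "{x,y} \<in> E" "x \<in> V" "y \<in> V" "x \<noteq> y"
  shows "\<exists>g. arc g \<and> pathstart g = p x \<and> pathfinish g = p y \<and> path_image g = path_image (\<gamma> {x,y})"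
proof -
  let ?e = "{x,y}"
  have a: "arc (\<gamma> ?e)" and se: "{pathstart (\<gamma> ?e), pathfinish (\<gamma> ?e)} = {p x, p y}"
    using arcs assms(1) by auto
  have pxy: "p x \<noteq> p y" using injp assms inj_on_def by metis
  show ?thesis
  proof (cases "pathstart (\<gamma> ?e) = p x")
    case True
    then have "pathfinish (\<gamma> ?e) = p y" using se pxy by (auto simp: doubleton_eq_iff)
    then show ?thesis using True a by blast
  next
    case False
    then have "pathstart (\<gamma> ?e) = p y" "pathfinish (\<gamma> ?e) = p x" using se by (auto simp: doubleton_eq_iff)
    then show ?thesis using a arc_reversepath[of "\<gamma> ?e"]
      by (intro exI[of _ "reversepath (\<gamma> ?e)"]) auto
  qed
qed

lemma path_arc:
  "distinct xs \<Longrightarrow> length xs \<ge> 2 \<Longrightarrow> set xs \<subseteq> V \<Longrightarrow> pedges xs \<subseteq> E \<Longrightarrow>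
   \<exists>c. arc c \<and> pathstart c = p (hd xs) \<and> pathfinish c = p (last xs) \<and>
       path_image c = (\<Union>e\<in>pedges xs. path_image (\<gamma> e))"
proof (induction xs rule: pedges.induct)
  case (1 x y zs)
  have xy: "x \<noteq> y" "x \<in> V" "y \<in> V" "{x,y} \<in> E" using 1 by auto
  obtain g where g: "arc g" "pathstart g = p x" "pathfinish g = p y" "path_image g = path_image (\<gamma> {x,y})"
    using edge_arc[OF xy(4,2,3,1)] by blast
  show ?case
  proof (cases zs)
    case Nil
    then show ?thesis using g by auto
  next
    case (Cons w ws)
    then obtain c where c: "arc c" "pathstart c = p y" "pathfinish c = p (last (y # zs))"
      "path_image c = (\<Union>e\<in>pedges (y # zs). path_image (\<gamma> e))"
      using 1 by auto
    have disj: "path_image g \<inter> path_image c \<subseteq> {pathstart c}"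
    proof
      fix z assume z: "z \<in> path_image g \<inter> path_image c"
      then obtain e' where e': "e' \<in> pedges (y # zs)" "z \<in> path_image (\<gamma> e')" using c by auto
      have e'sub: "e' \<subseteq> set (y # zs)" by (rule pedges_subset[OF e'(1)])
      have "e' \<in> E" using e' 1 by auto
      have "x \<notin> set (y # zs)" using 1 by auto
      then have "e' \<noteq> {x,y}" using e'sub by auto
      have nc: "path_image (\<gamma> {x,y}) \<inter> path_image (\<gamma> e') \<subseteq> p ` ({x,y} \<inter> e')"
        using nocross xy(4) \<open>e' \<in> E\<close> \<open>e' \<noteq> {x,y}\<close> by metis
      have "z \<in> path_image (\<gamma> {x,y})" using z g(4) by blast
      then have "z \<in> p ` ({x,y} \<inter> e')" using nc e'(2) by blast
      then have "z \<in> p ` {y}" using e'sub \<open>x \<notin> set (y # zs)\<close> by auto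
      then show "z \<in> {pathstart c}" using c by auto
    qed
    have "arc (g +++ c)" using arc_join[OF g(1) c(1)] g c disj by auto
    moreover have "path_image (g +++ c) = path_image g \<union> path_image c"
      using g c by (simp add: path_image_join)
    ultimately show ?thesis using g c by auto
  qed
qed auto

lemma not_inside:
  assumes "v \<in> V" "p v \<in> inside J" "J \<subseteq> p ` V \<union> (\<Union>e\<in>E. path_image (\<gamma> e))" "closed J"
  shows False
proof -
  let ?D = "p ` V \<union> (\<Union>e\<in>E. path_image (\<gamma> e))"
  have "p v \<in> closure (outside ?D)" using outer assms(1) frontier_def by blast
  also have "\<dots> \<subseteq> closure (outside J)" by (intro closure_mono outside_mono assms(3))
  finally have "p v \<in> closure (outside J)" .
  moreover have "inside J \<inter> closure (outside J) = {}"
    using open_Int_closure_eq_empty[OF open_inside[OF assms(4)]] by simp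
  ultimately show False using assms(2) by blast
qed

definition gp :: "'a \<Rightarrow> 'a \<Rightarrow> 'a list \<Rightarrow> bool" where
  "gp a b P \<longleftrightarrow> distinct P \<and> hd P = a \<and> last P = b \<and> length P \<ge> 3 \<and> set P \<subseteq> V \<and> pedges P \<subseteq> E"

lemma edge_two: "e \<in> E \<Longrightarrow> \<exists>u v. u \<in> V \<and> v \<in> V \<and> u \<noteq> v \<and> e = {u,v}"
  using sg unfolding simple_graph_def by blast

lemma vert_in_img:
  assumes "e \<in> E" "w \<in> e" shows "p w \<in> path_image (\<gamma> e)"
proof -
  have "p w \<in> {pathstart (\<gamma> e), pathfinish (\<gamma> e)}" using arcs assms by blast
  then have "p w = pathstart (\<gamma> e) \<or> p w = pathfinish (\<gamma> e)" by simp
  then show ?thesis using pathstart_in_path_image[of "\<gamma> e"] pathfinish_in_path_image[of "\<gamma> e"] by metis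
qed

lemma arc_of:
  assumes "gp a b P"
  obtains c where "arc c" "pathstart c = p a" "pathfinish c = p b"
    "path_image c = (\<Union>e\<in>pedges P. path_image (\<gamma> e))"
    "p (P ! 1) \<in> path_image c - {p a, p b}" "P ! 1 \<in> V"
    "path_image c \<subseteq> p ` V \<union> (\<Union>e\<in>E. path_image (\<gamma> e))"
proof -
  have d: "distinct P" "hd P = a" "last P = b" "length P \<ge> 3" "set P \<subseteq> V" "pedges P \<subseteq> E"
    using assms unfolding gp_def by auto
  obtain c where c: "arc c" "pathstart c = p a" "pathfinish c = p b"
    "path_image c = (\<Union>e\<in>pedges P. path_image (\<gamma> e))"
  proof -
    have "\<exists>c. arc c \<and> pathstart c = p (hd P) \<and> pathfinish c = p (last P) \<and>
       path_image c = (\<Union>e\<in>pedges P. path_image (\<gamma> e))"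
      by (rule path_arc) (use d in auto)
    then show ?thesis using that d(2,3) by blast
  qed
  have e1: "{P ! 0, P ! 1} \<in> pedges P" using pedges_first[of P] d(4) by simp
  have "{P ! 0, P ! 1} \<in> E" using e1 d(6) by blast
  then have "p (P ! 1) \<in> path_image (\<gamma> {P ! 0, P ! 1})" by (rule vert_in_img) simp
  then have pc: "p (P ! 1) \<in> path_image c" using c(4) e1 by blast
  have l: "0 < length P" "1 < length P" "length P - 1 < length P" "1 \<noteq> length P - 1"
    using d(4) by auto
  have h0: "P ! 0 = a" using d(2) l(1) hd_conv_nth[of P] by force
  have hl: "P ! (length P - 1) = b" using d(3) l(1) last_conv_nth[of P] by force
  have n1a: "P ! 1 \<noteq> a" using nth_eq_iff_index_eq[OF d(1) l(2) l(1)] h0 by simp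
  have n1b: "P ! 1 \<noteq> b" using nth_eq_iff_index_eq[OF d(1) l(2) l(3)] hl l(4) by simp
  have v1: "P ! 1 \<in> V" using d(5) nth_mem[OF l(2)] by blast
  have av: "a \<in> V" using d(5) nth_mem[OF l(1)] h0 by blast
  have bv: "b \<in> V" using d(5) nth_mem[OF l(3)] hl by blast
  have "p (P ! 1) \<noteq> p a" using injp v1 av n1a inj_on_contraD by metis
  moreover have "p (P ! 1) \<noteq> p b" using injp v1 bv n1b inj_on_contraD by metis
  ultimately have q: "p (P ! 1) \<in> path_image c - {p a, p b}" using pc by blast
  have sD: "path_image c \<subseteq> p ` V \<union> (\<Union>e\<in>E. path_image (\<gamma> e))" using c(4) d(6) by blast
  show ?thesis by (rule that[OF c q v1 sD])
qed

lemma img_inter: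
  assumes P: "gp a b P" and Q: "gp a b Q" and PQ: "set P \<inter> set Q = {a,b}"
  shows "(\<Union>e\<in>pedges P. path_image (\<gamma> e)) \<inter> (\<Union>e\<in>pedges Q. path_image (\<gamma> e)) \<subseteq> {p a, p b}"
proof
  fix z assume "z \<in> (\<Union>e\<in>pedges P. path_image (\<gamma> e)) \<inter> (\<Union>e\<in>pedges Q. path_image (\<gamma> e))"
  then obtain e e' where ee: "e \<in> pedges P" "e' \<in> pedges Q" "z \<in> path_image (\<gamma> e)" "z \<in> path_image (\<gamma> e')"
    by blast
  have dP: "distinct P" "hd P = a" "last P = b" "length P \<ge> 3" "pedges P \<subseteq> E" using P gp_def by auto
  have dQ: "pedges Q \<subseteq> E" using Q gp_def by auto
  have EE: "e \<in> E" "e' \<in> E" using ee dP dQ by auto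
  show "z \<in> {p a, p b}"
  proof (cases "e = e'")
    case True
    then have "e \<subseteq> {a,b}" using pedges_subset[OF ee(1)] pedges_subset[OF ee(2)] PQ by blast
    moreover obtain u v where "u \<noteq> v" "e = {u,v}" using edge_two[OF EE(1)] by blast
    ultimately have "e = {a,b}" by auto
    then have "{hd P, last P} \<in> pedges P" using ee(1) dP by simp
    then show ?thesis using pedges_hd_last dP by blast
  next
    case False
    have "path_image (\<gamma> e) \<inter> path_image (\<gamma> e') \<subseteq> p ` (e \<inter> e')"
      using nocross EE False by metis
    then have "z \<in> p ` (e \<inter> e')" using ee(3,4) by blast
    moreover have "e \<inter> e' \<subseteq> {a,b}" using pedges_subset[OF ee(1)] pedges_subset[OF ee(2)] PQ by blast
    ultimately show ?thesis by blast
  qed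
qed

lemma no_theta:
  assumes ab: "a \<noteq> b" and P1: "gp a b P1" and P2: "gp a b P2" and P3: "gp a b P3"
    and i12: "set P1 \<inter> set P2 = {a,b}" and i13: "set P1 \<inter> set P3 = {a,b}" and i23: "set P2 \<inter> set P3 = {a,b}"
  shows False
proof -
  let ?D = "p ` V \<union> (\<Union>e\<in>E. path_image (\<gamma> e))"
  obtain c1 where c1: "arc c1" "pathstart c1 = p a" "pathfinish c1 = p b"
    "path_image c1 = (\<Union>e\<in>pedges P1. path_image (\<gamma> e))"
    "p (P1 ! 1) \<in> path_image c1 - {p a, p b}" "P1 ! 1 \<in> V" "path_image c1 \<subseteq> ?D"
    using arc_of[OF P1] by blast
  obtain c2 where c2: "arc c2" "pathstart c2 = p a" "pathfinish c2 = p b"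
    "path_image c2 = (\<Union>e\<in>pedges P2. path_image (\<gamma> e))"
    "p (P2 ! 1) \<in> path_image c2 - {p a, p b}" "P2 ! 1 \<in> V" "path_image c2 \<subseteq> ?D"
    using arc_of[OF P2] by blast
  obtain c3 where c3: "arc c3" "pathstart c3 = p a" "pathfinish c3 = p b"
    "path_image c3 = (\<Union>e\<in>pedges P3. path_image (\<gamma> e))"
    "p (P3 ! 1) \<in> path_image c3 - {p a, p b}" "P3 ! 1 \<in> V" "path_image c3 \<subseteq> ?D"
    using arc_of[OF P3] by blast
  have ends: "p a \<in> path_image c1" "p b \<in> path_image c1" "p a \<in> path_image c2" "p b \<in> path_image c2"
     "p a \<in> path_image c3" "p b \<in> path_image c3"
    using c1(2,3) c2(2,3) c3(2,3) pathstart_in_path_image[of c1] pathfinish_in_path_image[of c1]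
      pathstart_in_path_image[of c2] pathfinish_in_path_image[of c2]
      pathstart_in_path_image[of c3] pathfinish_in_path_image[of c3] by simp_all
  have j12: "path_image c1 \<inter> path_image c2 = {p a, p b}"
  proof -
    have "path_image c1 \<inter> path_image c2 \<subseteq> {p a, p b}"
      unfolding c1(4) c2(4) by (rule img_inter[OF P1 P2 i12])
    then show ?thesis using ends by blast
  qed
  have j13: "path_image c1 \<inter> path_image c3 = {p a, p b}"
  proof -
    have "path_image c1 \<inter> path_image c3 \<subseteq> {p a, p b}"
      unfolding c1(4) c3(4) by (rule img_inter[OF P1 P3 i13])
    then show ?thesis using ends by blast
  qed
  have j23: "path_image c2 \<inter> path_image c3 = {p a, p b}"
  proof -
    have "path_image c2 \<inter> path_image c3 \<subseteq> {p a, p b}"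
      unfolding c2(4) c3(4) by (rule img_inter[OF P2 P3 i23])
    then show ?thesis using ends by blast
  qed
  have cl: "closed (path_image c1 \<union> path_image c2)" "closed (path_image c1 \<union> path_image c3)"
    "closed (path_image c2 \<union> path_image c3)"
    using c1(1) c2(1) c3(1) by (simp_all add: closed_Un compact_imp_closed compact_arc_image)
  from theta_inside[OF c1(1) c2(1) c3(1) c1(2) c2(2) c3(2) c1(3) c2(3) c3(3) j12 j13 j23 c1(5) c2(5) c3(5)]
  show False
  proof (elim disjE)
    assume "p (P1 ! 1) \<in> inside (path_image c2 \<union> path_image c3)"
    moreover have "path_image c2 \<union> path_image c3 \<subseteq> ?D" using c2(7) c3(7) by (rule Un_least)
    ultimately show False by (rule not_inside[OF c1(6) _ _ cl(3)])
  next
    assume "p (P2 ! 1) \<in> inside (path_image c1 \<union> path_image c3)"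
    moreover have "path_image c1 \<union> path_image c3 \<subseteq> ?D" using c1(7) c3(7) by (rule Un_least)
    ultimately show False by (rule not_inside[OF c2(6) _ _ cl(2)])
  next
    assume "p (P3 ! 1) \<in> inside (path_image c1 \<union> path_image c2)"
    moreover have "path_image c1 \<union> path_image c2 \<subseteq> ?D" using c1(7) c2(7) by (rule Un_least)
    ultimately show False by (rule not_inside[OF c3(6) _ _ cl(1)])
  qed
qed

end




lemma pedges_Cons2: "pedges (x # y # zs) = insert {x,y} (pedges (y # zs))" by simp

lemma pedges_nth: "pedges xs = {{xs!i, xs!(Suc i)} | i. Suc i < length xs}"
proof (induction xs rule: pedges.induct)
  case (1 x y zs)
  have "{{(x#y#zs)!i, (x#y#zs)!(Suc i)} | i. Suc i < length (x#y#zs)} =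
        insert {x,y} {{(y#zs)!i, (y#zs)!(Suc i)} | i. Suc i < length (y#zs)}"
  proof (rule set_eqI, rule iffI)
    fix e assume "e \<in> {{(x#y#zs)!i, (x#y#zs)!(Suc i)} | i. Suc i < length (x#y#zs)}"
    then obtain i where i: "e = {(x#y#zs)!i, (x#y#zs)!(Suc i)}" "Suc i < length (x#y#zs)" by blast
    show "e \<in> insert {x,y} {{(y#zs)!i, (y#zs)!(Suc i)} | i. Suc i < length (y#zs)}"
    proof (cases i)
      case 0 then show ?thesis using i by simp
    next
      case (Suc i') then show ?thesis using i by auto
    qed
  next
    fix e assume "e \<in> insert {x,y} {{(y#zs)!i, (y#zs)!(Suc i)} | i. Suc i < length (y#zs)}"
    then consider "e = {x,y}" | i where "e = {(y#zs)!i, (y#zs)!(Suc i)}" "Suc i < length (y#zs)" by blast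
    then show "e \<in> {{(x#y#zs)!i, (x#y#zs)!(Suc i)} | i. Suc i < length (x#y#zs)}"
    proof cases
      case 1 then show ?thesis by (intro CollectI exI[of _ 0]) simp
    next
      case (2 i) then show ?thesis by (intro CollectI exI[of _ "Suc i"]) simp
    qed
  qed
  then show ?case using 1 by simp
qed auto

lemma pedges_take: "pedges (take n xs) \<subseteq> pedges xs"
  unfolding pedges_nth by auto

lemma pedges_drop: "pedges (drop n xs) \<subseteq> pedges xs"
proof
  fix e assume "e \<in> pedges (drop n xs)"
  then obtain i where i: "e = {drop n xs ! i, drop n xs ! Suc i}" "Suc i < length (drop n xs)"
    unfolding pedges_nth by blast
  then have "e = {xs ! (n + i), xs ! Suc (n + i)}" "Suc (n + i) < length xs" by auto
  then show "e \<in> pedges xs" unfolding pedges_nth by blast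
qed

lemma pedges_rev: "pedges (rev xs) \<subseteq> pedges xs"
proof
  fix e assume "e \<in> pedges (rev xs)"
  then obtain i where i: "e = {rev xs ! i, rev xs ! Suc i}" "Suc i < length xs"
    unfolding pedges_nth by auto
  let ?m = "length xs - Suc (Suc i)"
  have "rev xs ! i = xs ! Suc ?m" "rev xs ! Suc i = xs ! ?m"
    using i(2) by (auto simp: rev_nth Suc_diff_Suc)
  then have "e = {xs ! ?m, xs ! Suc ?m}" "Suc ?m < length xs" using i by auto
  then show "e \<in> pedges xs" unfolding pedges_nth by blast
qed




context emb
begin

definition mp :: "'a set \<Rightarrow> 'a set \<Rightarrow> ('a \<Rightarrow> 'a) \<Rightarrow> ('a \<Rightarrow> 'a) \<Rightarrow> 'a list \<Rightarrow> bool" where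
  "mp X Y g1 g2 W \<longleftrightarrow> odd (length W) \<and> distinct W \<and>
     (\<forall>i. 2*i < length W \<longrightarrow> W!(2*i) \<in> X) \<and>
     (\<forall>i. 2*i+1 < length W \<longrightarrow> W!(2*i+1) \<in> Y \<and> {g1 (W!(2*i+1)), g2 (W!(2*i+1))} = {W!(2*i), W!(2*i+2)})"

definition hyp :: "'a set \<Rightarrow> 'a set \<Rightarrow> ('a \<Rightarrow> 'a) \<Rightarrow> ('a \<Rightarrow> 'a) \<Rightarrow> bool" where
  "hyp X Y g1 g2 \<longleftrightarrow> X \<subseteq> V \<and> Y \<subseteq> V \<and> X \<inter> Y = {} \<and>
     (\<forall>y\<in>Y. g1 y \<in> X \<and> g2 y \<in> X \<and> g1 y \<noteq> g2 y \<and> {y, g1 y} \<in> E \<and> {y, g2 y} \<in> E)"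

lemma hyp_adj: "\<forall>y\<in>Y. g1 y \<in> X \<and> g2 y \<in> X \<and> g1 y \<noteq> g2 y \<and> {y, g1 y} \<in> E \<and> {y, g2 y} \<in> E
   \<Longrightarrow> y \<in> Y \<Longrightarrow> x \<in> {g1 y, g2 y} \<Longrightarrow> {y, x} \<in> E"
  by auto

lemma mp_even: "mp X Y g1 g2 W \<Longrightarrow> even m \<Longrightarrow> m < length W \<Longrightarrow> W!m \<in> X"
  unfolding mp_def by (metis evenE)

lemma mp_odd: "mp X Y g1 g2 W \<Longrightarrow> odd m \<Longrightarrow> m < length W \<Longrightarrow>
   W!m \<in> Y \<and> {g1 (W!m), g2 (W!m)} = {W!(m-1), W!(m+1)}"
proof -
  assume a: "mp X Y g1 g2 W" "odd m" "m < length W"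
  then obtain i where i: "m = 2*i+1" by (metis oddE)
  then show ?thesis using a unfolding mp_def by auto
qed

lemma mp_set: "mp X Y g1 g2 W \<Longrightarrow> set W \<subseteq> X \<union> Y"
proof
  fix x assume a: "mp X Y g1 g2 W" "x \<in> set W"
  then obtain m where m: "m < length W" "W!m = x" by (auto simp: in_set_conv_nth)
  show "x \<in> X \<union> Y"
  proof (cases "even m")
    case True then show ?thesis using mp_even[OF a(1) True m(1)] m by auto
  next
    case False then show ?thesis using mp_odd[OF a(1) False m(1)] m by auto
  qed
qed

lemma mp_pedges:
  assumes "mp X Y g1 g2 W" "hyp X Y g1 g2"
  shows "pedges W \<subseteq> E"
proof
  fix e assume "e \<in> pedges W"
  then obtain i where i: "e = {W!i, W!(Suc i)}" "Suc i < length W" unfolding pedges_nth by blast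
  have H: "\<forall>y\<in>Y. g1 y \<in> X \<and> g2 y \<in> X \<and> g1 y \<noteq> g2 y \<and> {y, g1 y} \<in> E \<and> {y, g2 y} \<in> E"
    using assms(2) hyp_def by auto
  show "e \<in> E"
  proof (cases "even i")
    case True
    have o: "odd (Suc i)" using True by simp
    note q = mp_odd[OF assms(1) o i(2)]
    then have "W!i \<in> {g1 (W!Suc i), g2 (W!Suc i)}" by simp
    then have "{W!Suc i, W!i} \<in> E" using hyp_adj[OF H] q by blast
    then show ?thesis using i by (simp add: insert_commute)
  next
    case False
    note q = mp_odd[OF assms(1) False] 
    have "i < length W" using i by simp
    then have q: "W!i \<in> Y" "{g1 (W!i), g2 (W!i)} = {W!(i-1), W!(i+1)}" using q by auto
    then have "W!Suc i \<in> {g1 (W!i), g2 (W!i)}" by simp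
    then have "{W!i, W!Suc i} \<in> E" using hyp_adj[OF H] q by blast
    then show ?thesis using i by simp
  qed
qed

lemma mp_single: "x \<in> X \<Longrightarrow> mp X Y g1 g2 [x]"
  unfolding mp_def by auto

lemma mp_ext:
  assumes "mp X Y g1 g2 W" "z \<in> X" "y \<in> Y" "{g1 y, g2 y} = {z, W!0}" "z \<notin> set W" "y \<notin> set W"
    "X \<inter> Y = {}"
  shows "mp X Y g1 g2 (z # y # W)"
proof -
  have W: "odd (length W)" "distinct W" "\<forall>i. 2*i < length W \<longrightarrow> W!(2*i) \<in> X"
     "\<forall>i. 2*i+1 < length W \<longrightarrow> W!(2*i+1) \<in> Y \<and> {g1 (W!(2*i+1)), g2 (W!(2*i+1))} = {W!(2*i), W!(2*i+2)}"
    using assms(1) mp_def by auto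
  have zy: "z \<noteq> y" using assms by blast
  have ev: "\<forall>i. 2*i < length (z#y#W) \<longrightarrow> (z#y#W)!(2*i) \<in> X"
  proof (intro allI impI)
    fix i assume "2*i < length (z#y#W)"
    then show "(z#y#W)!(2*i) \<in> X"
    proof (cases i)
      case 0 then show ?thesis using assms by simp
    next
      case (Suc i')
      have "(z#y#W)!(2*i) = W!(2*i')" using Suc by simp
      then show ?thesis using W(3) Suc \<open>2*i < length (z#y#W)\<close> by auto
    qed
  qed
  have od: "\<forall>i. 2*i+1 < length (z#y#W) \<longrightarrow> (z#y#W)!(2*i+1) \<in> Y \<and>
      {g1 ((z#y#W)!(2*i+1)), g2 ((z#y#W)!(2*i+1))} = {(z#y#W)!(2*i), (z#y#W)!(2*i+2)}"
  proof (intro allI impI)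
    fix i assume il: "2*i+1 < length (z#y#W)"
    show "(z#y#W)!(2*i+1) \<in> Y \<and>
      {g1 ((z#y#W)!(2*i+1)), g2 ((z#y#W)!(2*i+1))} = {(z#y#W)!(2*i), (z#y#W)!(2*i+2)}"
    proof (cases i)
      case 0 then show ?thesis using assms by simp
    next
      case (Suc i')
      have e: "(z#y#W)!(2*i+1) = W!(2*i'+1)" "(z#y#W)!(2*i) = W!(2*i')" "(z#y#W)!(2*i+2) = W!(2*i'+2)"
        using Suc by simp_all
      show ?thesis unfolding e using W(4) Suc il by auto
    qed
  qed
  show ?thesis unfolding mp_def using W(1,2) ev od zy assms(5,6) by auto
qed

lemma incident_in_W:
  assumes "mp X Y g1 g2 W" "X \<inter> Y = {}" "y \<in> Y" "W!0 \<in> {g1 y, g2 y}" "y \<in> set W"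
  shows "y = W!1 \<and> 1 < length W"
proof -
  obtain m where m: "m < length W" "W!m = y" using assms(5) by (auto simp: in_set_conv_nth)
  have "odd m"
  proof
    assume "even m" then have "W!m \<in> X" using mp_even[OF assms(1) _ m(1)] by blast
    then show False using m assms(2,3) by blast
  qed
  note q = mp_odd[OF assms(1) this m(1)]
  have d: "distinct W" using assms(1) mp_def by auto
  have "W!0 = W!(m-1) \<or> W!0 = W!(m+1)" using q assms(4) m by auto
  moreover have "m + 1 < length W" using \<open>odd m\<close> m(1) assms(1) unfolding mp_def
    by (metis Suc_eq_plus1 Suc_lessI even_Suc)
  ultimately have "0 = m - 1 \<or> 0 = m + 1" using nth_eq_iff_index_eq[OF d] m(1) by force
  then have "m = 1" using \<open>odd m\<close> by presburger
  then show ?thesis using m by simp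
qed

end



context emb
begin

lemma theta_from:
  assumes W: "mp X Y g1 g2 W" and H: "hyp X Y g1 g2"
    and e: "e1 \<in> Y" "e2 \<in> Y" "e1 \<noteq> e2" "e1 \<notin> set W" "e2 \<notin> set W"
    and ad: "{e1, W!0} \<in> E" "{e1, W!(2*j)} \<in> E" "{e2, W!0} \<in> E" "{e2, W!(2*k)} \<in> E"
    and jk: "1 \<le> j" "j \<le> k" "2*k < length W"
  shows False
proof -
  let ?a = "W!0" let ?b = "W!(2*j)"
  have dW: "distinct W" using W mp_def by auto
  have sW: "set W \<subseteq> V" using mp_set[OF W] H hyp_def by auto
  have pW: "pedges W \<subseteq> E" by (rule mp_pedges[OF W H])
  have YV: "Y \<subseteq> V" using H hyp_def by auto
  have l: "0 < length W" "2*j < length W" using jk by auto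
  have ab: "?a \<noteq> ?b" using nth_eq_iff_index_eq[OF dW l] jk by simp
  have aW: "?a \<in> set W" "?b \<in> set W" using l by auto
  define P1 where "P1 = [?a, e1, ?b]"
  define P2 where "P2 = take (2*j+1) W"
  define Q where "Q = drop (2*j) (take (2*k+1) W)"
  define R where "R = rev Q"
  define P3 where "P3 = ?a # e2 # R"
  have setP2: "set P2 \<subseteq> set W" unfolding P2_def by (rule set_take_subset)
  have setQ: "set Q \<subseteq> set W" unfolding Q_def using set_drop_subset set_take_subset by fast
  have lQ: "length Q = 2*k + 1 - 2*j" unfolding Q_def using jk by auto
  have Qn: "Q \<noteq> []" using lQ jk by auto
  have hQ: "hd Q = ?b" unfolding Q_def using jk by (simp add: hd_drop_conv_nth)
  have lastQ: "last Q = W!(2*k)" unfolding Q_def using jk by (simp add: last_conv_nth)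
  have Qidx: "\<And>x. x \<in> set Q \<Longrightarrow> \<exists>m. 2*j \<le> m \<and> m \<le> 2*k \<and> x = W!m"
  proof -
    fix x assume "x \<in> set Q"
    then obtain i where i: "i < length Q" "Q!i = x" by (auto simp: in_set_conv_nth)
    then have "x = W!(2*j + i)" unfolding Q_def using jk by auto
    then show "\<exists>m. 2*j \<le> m \<and> m \<le> 2*k \<and> x = W!m" using i lQ by (intro exI[of _ "2*j+i"]) auto
  qed
  have P2idx: "\<And>x. x \<in> set P2 \<Longrightarrow> \<exists>m. m \<le> 2*j \<and> x = W!m"
  proof -
    fix x assume "x \<in> set P2"
    then obtain i where i: "i < length P2" "P2!i = x" by (auto simp: in_set_conv_nth)
    then have "x = W!i" "i \<le> 2*j" unfolding P2_def by auto
    then show "\<exists>m. m \<le> 2*j \<and> x = W!m" by blast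
  qed
  have aQ: "?a \<notin> set Q"
  proof
    assume "?a \<in> set Q"
    then obtain m where m: "2*j \<le> m" "m \<le> 2*k" "?a = W!m" using Qidx by blast
    have "m < length W" using m jk by simp
    then have "0 = m" using nth_eq_iff_index_eq[OF dW l(1), of m] m(3) by simp
    then show False using m jk by simp
  qed
  have P2Q: "set P2 \<inter> set Q \<subseteq> {?b}"
  proof
    fix x assume x: "x \<in> set P2 \<inter> set Q"
    obtain m1 where m1: "m1 \<le> 2*j" "x = W!m1" using P2idx x by blast
    obtain m2 where m2: "2*j \<le> m2" "m2 \<le> 2*k" "x = W!m2" using Qidx x by blast
    have "m1 = m2" using nth_eq_iff_index_eq[OF dW, of m1 m2] m1 m2 jk by simp
    then show "x \<in> {?b}" using m1 m2 by simp
  qed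
  have bP2: "?b \<in> set P2" "?a \<in> set P2"
  proof -
    have t: "take (2*j+1) W ! (2*j) = ?b" "take (2*j+1) W ! 0 = ?a" by simp_all
    have l1: "2*j < length (take (2*j+1) W)" and l2: "0 < length (take (2*j+1) W)" using l by simp_all
    have "take (2*j+1) W ! (2*j) \<in> set (take (2*j+1) W)" using nth_mem[OF l1] .
    moreover have "take (2*j+1) W ! 0 \<in> set (take (2*j+1) W)" using nth_mem[OF l2] .
    ultimately have "take (2*j+1) W ! (2*j) \<in> set (take (2*j+1) W)" "take (2*j+1) W ! 0 \<in> set (take (2*j+1) W)"
      by blast+
    then show "?b \<in> set P2" "?a \<in> set P2" unfolding P2_def t by simp_all
  qed
  have pQ: "pedges Q \<subseteq> E" unfolding Q_def using pedges_drop pedges_take pW by blast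
  obtain r rs where Rr: "R = r # rs" using Qn R_def by (cases "rev Q") auto
  have hR: "r = W!(2*k)" using Rr R_def lastQ Qn by (metis hd_rev list.sel(1))
  have lR: "last R = ?b" using R_def hQ Qn by (simp add: last_rev)
  have setR: "set R = set Q" unfolding R_def by simp
  have pR: "pedges R \<subseteq> E" unfolding R_def using pedges_rev pQ by blast
  have ne1: "e1 \<noteq> ?a" "e1 \<noteq> ?b" using e(4) aW by blast+
  have ne2: "e2 \<noteq> ?a" "e2 \<noteq> ?b" using e(5) aW by blast+
  have g1: "gp ?a ?b P1"
  proof -
    have "distinct P1" unfolding P1_def using ne1 ab by simp
    moreover have "hd P1 = ?a" "last P1 = ?b" "length P1 \<ge> 3" unfolding P1_def by simp_all
    moreover have "set P1 \<subseteq> V" unfolding P1_def using aW sW e(1) YV by auto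
    moreover have "pedges P1 \<subseteq> E"
    proof -
      have "pedges P1 = {{?a, e1}, {e1, ?b}}" unfolding P1_def by simp
      moreover have "{?a, e1} \<in> E" using ad(1) insert_commute[of ?a e1 "{}"] by simp
      ultimately show ?thesis using ad(2) by simp
    qed
    ultimately show ?thesis unfolding gp_def by blast
  qed
  have g2: "gp ?a ?b P2"
  proof -
    have "distinct P2" unfolding P2_def using dW by simp
    moreover have "hd P2 = ?a" unfolding P2_def using l by (simp add: hd_conv_nth)
    moreover have "last P2 = ?b" unfolding P2_def using l by (simp add: last_conv_nth)
    moreover have "length P2 \<ge> 3" unfolding P2_def using l jk by simp
    moreover have "set P2 \<subseteq> V" using setP2 sW by blast
    moreover have "pedges P2 \<subseteq> E" unfolding P2_def using pedges_take pW by blast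
    ultimately show ?thesis unfolding gp_def by blast
  qed
  have g3: "gp ?a ?b P3"
  proof -
    have dR: "distinct R" unfolding R_def Q_def using dW by simp
    have aR: "?a \<notin> set R" using aQ setR by simp
    have e2R: "e2 \<notin> set R" using setR setQ e(5) by blast
    have "distinct P3" unfolding P3_def using dR aR e2R ne2 by simp
    moreover have "hd P3 = ?a" unfolding P3_def by simp
    moreover have "last P3 = ?b"
    proof -
      have "last P3 = last R" unfolding P3_def Rr by simp
      then show ?thesis using lR by (rule trans)
    qed
    moreover have "length P3 \<ge> 3" unfolding P3_def Rr by simp
    moreover have "set P3 \<subseteq> V"
    proof -
      have s1: "set R \<subseteq> V" using setR setQ sW by simp
      have s2: "?a \<in> V" using aW sW by blast
      have s3: "e2 \<in> V" using e(2) YV by blast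
      have "set P3 = insert ?a (insert e2 (set R))" unfolding P3_def by simp
      then show ?thesis using s1 s2 s3 by (simp only: insert_subset)
    qed
    moreover have "pedges P3 \<subseteq> E"
    proof -
      have eq: "pedges P3 = insert {?a, e2} (insert {e2, r} (pedges R))" unfolding P3_def Rr by simp
      have h1: "{?a, e2} \<in> E" using ad(3) insert_commute[of ?a e2 "{}"] by simp
      have h2: "{e2, r} \<in> E" using ad(4) unfolding hR .
      show ?thesis unfolding eq using h1 h2 pR by (simp only: insert_subset)
    qed
    ultimately show ?thesis unfolding gp_def by blast
  qed
  have bR: "?b \<in> set R" using lR Rr by (metis last_in_set list.simps(3))
  have sP1: "set P1 = {?a, e1, ?b}" unfolding P1_def by simp
  have sP3: "set P3 = insert ?a (insert e2 (set R))" unfolding P3_def by simp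
  have e1P2: "e1 \<notin> set P2" using setP2 e(4) by blast
  have e2P2: "e2 \<notin> set P2" using setP2 e(5) by blast
  have e1R: "e1 \<notin> set R" using setR setQ e(4) by blast
  have i12: "set P1 \<inter> set P2 = {?a, ?b}" unfolding sP1 using bP2 e1P2 by blast
  have i13: "set P1 \<inter> set P3 = {?a, ?b}" unfolding sP1 sP3 using bR e1R e(3) by blast
  have i23: "set P2 \<inter> set P3 = {?a, ?b}" unfolding sP3 using bR bP2 setR P2Q e2P2 by blast
  show False by (rule no_theta[OF ab g1 g2 g3 i12 i13 i23])
qed

end



lemma two_elems: "finite S \<Longrightarrow> 2 \<le> card S \<Longrightarrow> \<exists>a b. a \<in> S \<and> b \<in> S \<and> a \<noteq> b"
proof -
  assume f: "finite S" and c: "2 \<le> card S"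
  then have "S \<noteq> {}" by auto
  then obtain a where a: "a \<in> S" by blast
  have "card (S - {a}) \<ge> 1" using c a f by simp
  have "S - {a} \<noteq> {}"
  proof
    assume h: "S - {a} = {}"
    have "card (S - {a}) = 0" unfolding h by simp
    then show False using \<open>card (S - {a}) \<ge> 1\<close> by simp
  qed
  then obtain b where "b \<in> S - {a}" by blast
  then show ?thesis using a by blast
qed

context emb
begin

lemma deg3_false:
  assumes H: "hyp X Y g1 g2" and fX: "finite X" and fY: "finite Y" and ne: "X \<noteq> {}"
    and deg: "\<forall>x\<in>X. 3 \<le> card {y\<in>Y. g1 y = x \<or> g2 y = x}"
  shows False
proof -
  have Hy: "\<forall>y\<in>Y. g1 y \<in> X \<and> g2 y \<in> X \<and> g1 y \<noteq> g2 y \<and> {y, g1 y} \<in> E \<and> {y, g2 y} \<in> E"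
    and XY: "X \<inter> Y = {}" using H hyp_def by auto
  have bnd: "\<forall>W'. mp X Y g1 g2 W' \<longrightarrow> length W' < card (X \<union> Y) + 1"
  proof (intro allI impI)
    fix W' assume w: "mp X Y g1 g2 W'"
    then have "distinct W'" using mp_def by auto
    then have "length W' = card (set W')" by (simp add: distinct_card)
    also have "\<dots> \<le> card (X \<union> Y)" using mp_set[OF w] fX fY by (intro card_mono) auto
    finally show "length W' < card (X \<union> Y) + 1" by simp
  qed
  obtain x where x: "x \<in> X" using ne by blast
  obtain W where W: "mp X Y g1 g2 W" and mx: "\<forall>W'. mp X Y g1 g2 W' \<longrightarrow> length W' \<le> length W"
  proof -
    have "\<exists>W. mp X Y g1 g2 W \<and> (\<forall>W'. mp X Y g1 g2 W' \<longrightarrow> length W' \<le> length W)"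
      by (rule Lattices_Big.ex_has_greatest_nat[of "mp X Y g1 g2" "[x]" length "card (X \<union> Y) + 1"])
        (use mp_single[OF x] bnd in auto)
    then show ?thesis using that by blast
  qed
  have lW: "0 < length W" using W mp_def by (metis odd_pos)
  let ?x0 = "W!0"
  have x0X: "?x0 \<in> X" using mp_even[OF W _ lW] by simp
  define A where "A = {y\<in>Y. g1 y = ?x0 \<or> g2 y = ?x0}"
  have cA: "3 \<le> card A" using deg x0X A_def by blast
  have fA: "finite A" using fY A_def by simp
  define oth where "oth y = (if g1 y = ?x0 then g2 y else g1 y)" for y
  have othp: "\<And>y. y \<in> A \<Longrightarrow> {g1 y, g2 y} = {oth y, ?x0} \<and> oth y \<in> X \<and> oth y \<noteq> ?x0 \<and>
      y \<in> Y \<and> {y, ?x0} \<in> E \<and> {y, oth y} \<in> E"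
  proof -
    fix y assume y: "y \<in> A"
    then have yY: "y \<in> Y" and g: "g1 y = ?x0 \<or> g2 y = ?x0" using A_def by auto
    have h: "g1 y \<in> X" "g2 y \<in> X" "g1 y \<noteq> g2 y" "{y, g1 y} \<in> E" "{y, g2 y} \<in> E" using Hy yY by auto
    show "{g1 y, g2 y} = {oth y, ?x0} \<and> oth y \<in> X \<and> oth y \<noteq> ?x0 \<and>
      y \<in> Y \<and> {y, ?x0} \<in> E \<and> {y, oth y} \<in> E"
    proof (cases "g1 y = ?x0")
      case True
      then have "oth y = g2 y" using oth_def by simp
      then show ?thesis using True h yY by auto
    next
      case False
      then have "oth y = g1 y" "g2 y = ?x0" using oth_def g by auto
      then show ?thesis using False h yY by auto
    qed
  qed
  have oeq: "\<And>y. y \<in> A \<Longrightarrow> {g1 y, g2 y} = {oth y, ?x0}"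
  proof -
    fix y assume "y \<in> A"
    from othp[OF this] show "{g1 y, g2 y} = {oth y, ?x0}" by (elim conjE) assumption
  qed
  have oX: "\<And>y. y \<in> A \<Longrightarrow> oth y \<in> X"
  proof -
    fix y assume "y \<in> A"
    from othp[OF this] show "oth y \<in> X" by (elim conjE) assumption
  qed
  have oN: "\<And>y. y \<in> A \<Longrightarrow> oth y \<noteq> ?x0"
  proof -
    fix y assume "y \<in> A"
    from othp[OF this] show "oth y \<noteq> ?x0" by (elim conjE) assumption
  qed
  have oY: "\<And>y. y \<in> A \<Longrightarrow> y \<in> Y"
  proof -
    fix y assume "y \<in> A"
    from othp[OF this] show "y \<in> Y" by (elim conjE) assumption
  qed
  have oE1: "\<And>y. y \<in> A \<Longrightarrow> {y, ?x0} \<in> E"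
  proof -
    fix y assume "y \<in> A"
    from othp[OF this] show "{y, ?x0} \<in> E" by (elim conjE) assumption
  qed
  have oE2: "\<And>y. y \<in> A \<Longrightarrow> {y, oth y} \<in> E"
  proof -
    fix y assume "y \<in> A"
    from othp[OF this] show "{y, oth y} \<in> E" by (elim conjE) assumption
  qed
  have ox0: "\<And>y. y \<in> A \<Longrightarrow> ?x0 \<in> {g1 y, g2 y}"
  proof -
    fix y assume "y \<in> A"
    then have "{g1 y, g2 y} = {oth y, ?x0}" by (rule oeq)
    then show "?x0 \<in> {g1 y, g2 y}" by simp
  qed
  have notW: "\<And>y. y \<in> A \<Longrightarrow> y \<noteq> W!1 \<Longrightarrow> y \<notin> set W"
  proof -
    fix y assume y: "y \<in> A" "y \<noteq> W!1"
    show "y \<notin> set W"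
    proof
      assume yW: "y \<in> set W"
      have "y = W!1 \<and> 1 < length W" by (rule incident_in_W[OF W XY oY[OF y(1)] ox0[OF y(1)] yW])
      then show False using y by simp
    qed
  qed
  have othW: "\<And>y. y \<in> A \<Longrightarrow> y \<noteq> W!1 \<Longrightarrow> \<exists>i. 1 \<le> i \<and> 2*i < length W \<and> oth y = W!(2*i)"
  proof -
    fix y assume y: "y \<in> A" "y \<noteq> W!1"
    have yW: "y \<notin> set W" by (rule notW[OF y])
    have "oth y \<in> set W"
    proof (rule ccontr)
      assume nW: "oth y \<notin> set W"
      have "{g1 y, g2 y} = {oth y, W!0}" using oeq[OF y(1)] .
      then have "mp X Y g1 g2 (oth y # y # W)" by (rule mp_ext[OF W oX[OF y(1)] oY[OF y(1)] _ nW yW XY])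
      then have "length (oth y # y # W) \<le> length W" using mx by blast
      then show False by simp
    qed
    then obtain m where m: "m < length W" "W!m = oth y" by (auto simp: in_set_conv_nth)
    have "even m"
    proof (rule ccontr)
      assume om: "\<not> even m"
      have "W!m \<in> Y" using mp_odd[OF W om m(1), THEN conjunct1] .
      moreover have "W!m \<in> X" using m(2) oX[OF y(1)] by simp
      ultimately show False using XY by blast
    qed
    then obtain i where i: "m = 2*i" by (metis evenE)
    have "m \<noteq> 0"
    proof
      assume "m = 0"
      then have "oth y = ?x0" using m(2) by simp
      then show False using oN[OF y(1)] by simp
    qed
    then have "1 \<le> i" using i by simp
    moreover have "2*i < length W" using i m(1) by simp
    moreover have "oth y = W!(2*i)" using i m(2) by simp
    ultimately show "\<exists>i. 1 \<le> i \<and> 2*i < length W \<and> oth y = W!(2*i)" by blast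
  qed
  have "card (A - {W!1}) \<ge> 2"
  proof -
    have "card A - card {W!1} \<le> card (A - {W!1})" by (rule diff_card_le_card_Diff) simp
    then show ?thesis using cA by simp
  qed
  then obtain e1 e2 where e12: "e1 \<in> A - {W!1}" "e2 \<in> A - {W!1}" "e1 \<noteq> e2"
    using two_elems[of "A - {W!1}"] fA by auto
  obtain j1 where j1: "1 \<le> j1" "2*j1 < length W" "oth e1 = W!(2*j1)" using othW e12 by blast
  obtain j2 where j2: "1 \<le> j2" "2*j2 < length W" "oth e2 = W!(2*j2)" using othW e12 by blast
  have eA: "e1 \<in> A" "e2 \<in> A" using e12 by auto
  have o1: "e1 \<in> Y" "{e1, W!0} \<in> E" "{e1, W!(2*j1)} \<in> E"
    using oY[OF eA(1)] oE1[OF eA(1)] oE2[OF eA(1)] j1(3) by simp_all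
  have o2: "e2 \<in> Y" "{e2, W!0} \<in> E" "{e2, W!(2*j2)} \<in> E"
    using oY[OF eA(2)] oE1[OF eA(2)] oE2[OF eA(2)] j2(3) by simp_all
  have n1: "e1 \<notin> set W" using notW e12 by blast
  have n2: "e2 \<notin> set W" using notW e12 by blast
  show False
  proof (cases "j1 \<le> j2")
    case True
    show False by (rule theta_from[OF W H o1(1) o2(1) e12(3) n1 n2 o1(2) o1(3) o2(2) o2(3) j1(1) True j2(2)])
  next
    case False
    then have "j2 \<le> j1" by simp
    show False by (rule theta_from[OF W H o2(1) o1(1) e12(3)[symmetric] n2 n1 o2(2) o2(3) o1(2) o1(3) j2(1) \<open>j2 \<le> j1\<close> j1(2)])
  qed
qed

end



context emb
begin

lemma count_lemma:
  "finite X \<Longrightarrow> X \<noteq> {} \<Longrightarrow> hyp X Y g1 g2 \<Longrightarrow> card Y + 2 \<le> 2 * card X"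
proof (induction "card X" arbitrary: X Y rule: less_induct)
  case less
  have fV: "finite V" using sg simple_graph_def by auto
  have H: "X \<subseteq> V" "Y \<subseteq> V" "X \<inter> Y = {}"
    "\<forall>y\<in>Y. g1 y \<in> X \<and> g2 y \<in> X \<and> g1 y \<noteq> g2 y \<and> {y, g1 y} \<in> E \<and> {y, g2 y} \<in> E"
    using less.prems(3) hyp_def by auto
  have fY: "finite Y" using H(2) fV finite_subset by blast
  show ?case
  proof (cases "\<exists>x\<in>X. card {y\<in>Y. g1 y = x \<or> g2 y = x} \<le> 2")
    case False
    then have "\<forall>x\<in>X. 3 \<le> card {y\<in>Y. g1 y = x \<or> g2 y = x}" by auto
    then have False using deg3_false[OF less.prems(3) less.prems(1) fY less.prems(2)] by blast
    then show ?thesis ..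
  next
    case True
    then obtain x where x: "x \<in> X" "card {y\<in>Y. g1 y = x \<or> g2 y = x} \<le> 2" by blast
    define Ax where "Ax = {y\<in>Y. g1 y = x \<or> g2 y = x}"
    show ?thesis
    proof (cases "X = {x}")
      case True
      have "Y = {}"
      proof (rule ccontr)
        assume "Y \<noteq> {}"
        then obtain y where "y \<in> Y" by blast
        then have "g1 y \<in> {x}" "g2 y \<in> {x}" "g1 y \<noteq> g2 y" using H(4) True by auto
        then show False by simp
      qed
      then show ?thesis using True by simp
    next
      case False
      let ?X' = "X - {x}" let ?Y' = "Y - Ax"
      have ne': "?X' \<noteq> {}" using False x(1) by blast
      have f': "finite ?X'" using less.prems(1) by simp
      have lt: "card ?X' < card X" by (rule card_Diff1_less[OF less.prems(1) x(1)])
      have h': "hyp ?X' ?Y' g1 g2"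
      proof -
        have "\<forall>y\<in>?Y'. g1 y \<in> ?X' \<and> g2 y \<in> ?X' \<and> g1 y \<noteq> g2 y \<and> {y, g1 y} \<in> E \<and> {y, g2 y} \<in> E"
        proof
          fix y assume y: "y \<in> ?Y'"
          then have yY: "y \<in> Y" and nx: "g1 y \<noteq> x" "g2 y \<noteq> x" unfolding Ax_def by auto
          have "g1 y \<in> X \<and> g2 y \<in> X \<and> g1 y \<noteq> g2 y \<and> {y, g1 y} \<in> E \<and> {y, g2 y} \<in> E"
            using H(4) yY by blast
          then show "g1 y \<in> ?X' \<and> g2 y \<in> ?X' \<and> g1 y \<noteq> g2 y \<and> {y, g1 y} \<in> E \<and> {y, g2 y} \<in> E"
            using nx by blast
        qed
        moreover have "?X' \<subseteq> V" "?Y' \<subseteq> V" "?X' \<inter> ?Y' = {}" using H(1,2,3) by blast+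
        ultimately show ?thesis unfolding hyp_def by blast
      qed
      have IH: "card ?Y' + 2 \<le> 2 * card ?X'" by (rule less.hyps[OF lt f' ne' h'])
      have "card Y \<le> card (?Y' \<union> Ax)" using fY Ax_def by (intro card_mono) auto
      also have "\<dots> \<le> card ?Y' + card Ax" by (rule card_Un_le)
      finally have "card Y \<le> card ?Y' + 2" using x(2) Ax_def by simp
      moreover have "card ?X' = card X - 1" using x(1) less.prems(1) by simp
      moreover have "card X \<ge> 1"
      proof -
        have "0 < card X" using less.prems(1,2) by (simp add: card_gt_0_iff)
        then show ?thesis by simp
      qed
      ultimately show ?thesis using IH by linarith
    qed
  qed
qed

end

theorem theorem4p1:
  fixes V :: "'a set" and E :: "'a set set" and S :: "'a set"
  assumes "outerplanar V E"
    and "card V \<ge> 3"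
    and "secure_total_dominating V E S"
  shows "int (card S) \<ge> \<lceil>(real (card V) + 2) / 3\<rceil>"
proof -
  have sgV: "simple_graph V E" using assms(1) unfolding outerplanar_def by (rule conjunct1)
  have ex: "\<exists>(p :: 'a \<Rightarrow> complex) (\<gamma> :: 'a set \<Rightarrow> real \<Rightarrow> complex).
        inj_on p V \<and>
        (\<forall>e\<in>E. arc (\<gamma> e) \<and> {pathstart (\<gamma> e), pathfinish (\<gamma> e)} = p ` e) \<and>
        (\<forall>e\<in>E. \<forall>v\<in>V. p v \<in> path_image (\<gamma> e) \<longrightarrow> v \<in> e) \<and>
        (\<forall>e1\<in>E. \<forall>e2\<in>E. e1 \<noteq> e2 \<longrightarrow>
            path_image (\<gamma> e1) \<inter> path_image (\<gamma> e2) \<subseteq> p ` (e1 \<inter> e2)) \<and>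
        (let D = p ` V \<union> (\<Union>e\<in>E. path_image (\<gamma> e))
         in \<forall>v\<in>V. p v \<in> frontier (outside D))"
    using assms(1) unfolding outerplanar_def by (rule conjunct2)
  obtain p :: "'a \<Rightarrow> complex" and \<gamma> :: "'a set \<Rightarrow> real \<Rightarrow> complex" where
    pg1: "inj_on p V" and
    pg2: "\<forall>e\<in>E. arc (\<gamma> e) \<and> {pathstart (\<gamma> e), pathfinish (\<gamma> e)} = p ` e" and
    pg3: "\<forall>e\<in>E. \<forall>v\<in>V. p v \<in> path_image (\<gamma> e) \<longrightarrow> v \<in> e" and
    pg4: "\<forall>e1\<in>E. \<forall>e2\<in>E. e1 \<noteq> e2 \<longrightarrow>
            path_image (\<gamma> e1) \<inter> path_image (\<gamma> e2) \<subseteq> p ` (e1 \<inter> e2)" and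
    pg5: "let D = p ` V \<union> (\<Union>e\<in>E. path_image (\<gamma> e))
         in \<forall>v\<in>V. p v \<in> frontier (outside D)"
    using ex by (elim exE conjE) (rule that; assumption)
  have pg5': "\<forall>v\<in>V. p v \<in> frontier (outside (p ` V \<union> (\<Union>e\<in>E. path_image (\<gamma> e))))"
    using pg5 by (simp only: Let_def)
  have "emb V E p \<gamma>" by (rule emb.intro[OF sgV pg1 pg2 pg3 pg4 pg5'])
  then interpret emb V E p \<gamma> .
  have fV: "finite V" using sg simple_graph_def by auto
  have td: "S \<subseteq> V" "\<forall>x\<in>V. \<exists>s\<in>S. adj E x s"
    and sec: "\<forall>u\<in>V - S. \<exists>v\<in>S. adj E u v \<and> total_dominating V E ((S - {v}) \<union> {u})"
    using assms(3) unfolding secure_total_dominating_def total_dominating_def by auto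
  have noloop: "\<And>u. \<not> adj E u u"
  proof
    fix u assume "adj E u u"
    then have "{u} \<in> E" unfolding adj_def by simp
    then obtain a b where ab: "a \<noteq> b" "{u} = {a, b}" using edge_two by blast
    have "a \<in> {u}" "b \<in> {u}" using ab(2) by blast+
    then show False using ab(1) by simp
  qed
  have ex: "\<forall>u\<in>V - S. \<exists>vs. fst vs \<in> S \<and> snd vs \<in> S \<and> fst vs \<noteq> snd vs \<and> {u, fst vs} \<in> E \<and> {u, snd vs} \<in> E"
  proof
    fix u assume u: "u \<in> V - S"
    obtain v where v: "v \<in> S" "adj E u v" "total_dominating V E ((S - {v}) \<union> {u})" using sec u by blast
    then obtain s where s: "s \<in> (S - {v}) \<union> {u}" "adj E u s"
      using u unfolding total_dominating_def by blast
    have "s \<noteq> u" using s(2) noloop by blast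
    then have "s \<in> S" "s \<noteq> v" using s(1) by auto
    then show "\<exists>vs. fst vs \<in> S \<and> snd vs \<in> S \<and> fst vs \<noteq> snd vs \<and> {u, fst vs} \<in> E \<and> {u, snd vs} \<in> E"
      using v s unfolding adj_def by (intro exI[of _ "(v, s)"]) auto
  qed
  then obtain f where f: "\<forall>u\<in>V - S. fst (f u) \<in> S \<and> snd (f u) \<in> S \<and> fst (f u) \<noteq> snd (f u) \<and>
      {u, fst (f u)} \<in> E \<and> {u, snd (f u)} \<in> E"
    using bchoice[OF ex] by blast
  have h: "hyp S (V - S) (\<lambda>u. fst (f u)) (\<lambda>u. snd (f u))"
    unfolding hyp_def using td(1) f by auto
  have fS: "finite S" using td(1) fV finite_subset by blast
  have neS: "S \<noteq> {}"
  proof -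
    have "V \<noteq> {}" using assms(2) by auto
    then obtain x where "x \<in> V" by blast
    then show ?thesis using td(2) by blast
  qed
  have c: "card (V - S) + 2 \<le> 2 * card S" by (rule count_lemma[OF fS neS h])
  have "card (V - S) = card V - card S" using card_Diff_subset[OF fS td(1)] .
  moreover have "card S \<le> card V" using card_mono[OF fV td(1)] .
  ultimately have "card V = card S + card (V - S)" by simp
  then have "card V + 2 \<le> 3 * card S" using c by linarith
  then have "(real (card V) + 2) / 3 \<le> real_of_int (int (card S))" by simp
  then show ?thesis by (simp add: ceiling_le_iff)
qed



end
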